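(* If $a,b>0$ and $1<q<p$, then for every $\lambda>0$ the function $u=0$ is a strict local minimizer of $I_{\lambda,s}$ in $X_p^s$.
   Context: $\Omega\subset\mathbb{R}^N$ bounded smooth domain, $s\in(0,1)$, $p>1$, $N>sp$, $p_s^*=\frac{Np}{N-sp}$. $X_p^s=\{u\in W^{s,p}(\mathbb{R}^N): u=0 \text{ a.e. in } \mathbb{R}^N\setminus\Omega\}$ with norm $\|u\|_{X_p^s}=\big(\int_{\mathbb{R}^{2N}}\frac{|u(x)-u(y)|^p}{|x-y|^{N+sp}}dxdy\big)^{1/p}$. $I_{\lambda,s}(u)=\frac1p\|u\|_{X_p^s}^p+\frac{\lambda}{q}\int_\Omega|u|^q-\frac ap\int_\Omega|u|^p-\frac{b}{p_s^*}\int_\Omega(u^+)^{p_s^*}$, where $u^+=\max\{u,0\}$. *)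

theory Defs
  imports "HOL-Analysis.Analysis"
begin

fun Ck :: "nat \<Rightarrow> ('a::euclidean_space \<Rightarrow> real) \<Rightarrow> bool" where
  "Ck 0 f = continuous_on UNIV f"
| "Ck (Suc k) f = ((\<forall>x. f differentiable (at x)) \<and>
                    (\<forall>v. Ck k (\<lambda>x. frechet_derivative f (at x) v)))"

definition smooth_fun :: "('a::euclidean_space \<Rightarrow> real) \<Rightarrow> bool" where
  "smooth_fun f \<longleftrightarrow> (\<forall>k. Ck k f)"

definition smooth_domain :: "'a::euclidean_space set \<Rightarrow> bool" where
  "smooth_domain \<Omega> \<longleftrightarrow> open \<Omega> \<and> connected \<Omega> \<and> \<Omega> \<noteq> {} \<and>
     (\<forall>x\<in>frontier \<Omega>. \<exists>r>0. \<exists>\<phi>. smooth_fun \<phi> \<and>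
        (\<forall>y\<in>ball x r. \<exists>v. frechet_derivative \<phi> (at y) v \<noteq> 0) \<and>
        \<Omega> \<inter> ball x r = {y\<in>ball x r. \<phi> y < 0})"

definition gagliardo :: "real \<Rightarrow> real \<Rightarrow> ('a::euclidean_space \<Rightarrow> real) \<Rightarrow> ennreal" where
  "gagliardo s p u = (\<integral>\<^sup>+ z. ennreal (\<bar>u (fst z) - u (snd z)\<bar> powr p /
        norm (fst z - snd z) powr (real DIM('a) + s * p)) \<partial>(lborel :: ('a \<times> 'a) measure))"

definition Wsp :: "real \<Rightarrow> real \<Rightarrow> ('a::euclidean_space \<Rightarrow> real) set" where
  "Wsp s p = {u. u \<in> borel_measurable lebesgue \<and>
                 integrable lebesgue (\<lambda>x. \<bar>u x\<bar> powr p) \<and> gagliardo s p u < \<infinity>}"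

definition Xsp :: "'a::euclidean_space set \<Rightarrow> real \<Rightarrow> real \<Rightarrow> ('a \<Rightarrow> real) set" where
  "Xsp \<Omega> s p = {u \<in> Wsp s p. AE x in lebesgue. x \<notin> \<Omega> \<longrightarrow> u x = 0}"

definition Xnorm :: "real \<Rightarrow> real \<Rightarrow> ('a::euclidean_space \<Rightarrow> real) \<Rightarrow> real" where
  "Xnorm s p u = enn2real (gagliardo s p u) powr (1 / p)"

definition crit_exp :: "nat \<Rightarrow> real \<Rightarrow> real \<Rightarrow> real" where
  "crit_exp N s p = real N * p / (real N - s * p)"

definition I_fun :: "'a::euclidean_space set \<Rightarrow> real \<Rightarrow> real \<Rightarrow> real \<Rightarrow> real \<Rightarrow> real
                     \<Rightarrow> real \<Rightarrow> ('a \<Rightarrow> real) \<Rightarrow> real" where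
  "I_fun \<Omega> s p q a b lam u =
     1 / p * Xnorm s p u powr p
     + lam / q * (LINT x:\<Omega>|lebesgue. \<bar>u x\<bar> powr q)
     - a / p * (LINT x:\<Omega>|lebesgue. \<bar>u x\<bar> powr p)
     - b / crit_exp DIM('a) s p * (LINT x:\<Omega>|lebesgue. max (u x) 0 powr crit_exp DIM('a) s p)"

definition strict_local_min_X :: "'a::euclidean_space set \<Rightarrow> real \<Rightarrow> real \<Rightarrow>
     (('a \<Rightarrow> real) \<Rightarrow> real) \<Rightarrow> ('a \<Rightarrow> real) \<Rightarrow> bool" where
  "strict_local_min_X \<Omega> s p J u \<longleftrightarrow> u \<in> Xsp \<Omega> s p \<and>
     (\<exists>\<delta>>0. \<forall>v\<in>Xsp \<Omega> s p. 0 < Xnorm s p (\<lambda>x. v x - u x) \<and> Xnorm s p (\<lambda>x. v x - u x) < \<delta>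
        \<longrightarrow> J u < J v)"

end

theory Submission
  imports Defs
begin

lemma real_core:
  fixes \<omega> jr A gr p P \<theta> N :: real
  assumes om: "\<omega> > 0" and jr: "jr > 0" and A: "A > 0" and gr: "gr \<ge> 0"
    and th: "0 < \<theta>" and P: "P > 0" and pP: "p = P * (1 - \<theta>)"
    and H: "\<And>\<rho>. \<rho> > 0 \<Longrightarrow> \<omega> * \<rho> \<le> \<rho> powr (1 + \<theta>) * gr / A powr p + jr / A powr P"
  shows "A powr P \<le> (2 / \<omega>) powr (1 + \<theta>) * jr powr \<theta> * gr"
proof -
  define \<rho> where "\<rho> = 2 * jr / (\<omega> * A powr P)"
  have rp: "\<rho> > 0" using om jr A by (simp add: \<rho>_def)
  have e1: "jr / A powr P = \<omega> * \<rho> / 2" using om A by (simp add: \<rho>_def field_simps)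
  from H[OF rp] e1 have "\<omega> * \<rho> / 2 \<le> \<rho> powr (1 + \<theta>) * gr / A powr p" by linarith
  also have "\<rho> powr (1 + \<theta>) = \<rho> * \<rho> powr \<theta>" using rp by (simp add: powr_add)
  finally have h1: "\<omega> * \<rho> / 2 \<le> \<rho> * (\<rho> powr \<theta> * gr / A powr p)" by simp
  have "\<rho> * (\<omega> / 2) \<le> \<rho> * (\<rho> powr \<theta> * gr / A powr p)"
    by (metis h1 mult.commute times_divide_eq_right)
  hence h2: "\<omega> / 2 \<le> \<rho> powr \<theta> * gr / A powr p" by (metis mult_le_cancel_left_pos rp)
  have rt: "\<rho> powr \<theta> = (2 / \<omega>) powr \<theta> * jr powr \<theta> / A powr (P * \<theta>)"
    unfolding \<rho>_def using om jr A
    by (simp add: powr_divide powr_mult powr_powr field_simps)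
  have "\<omega> / 2 * A powr p * A powr (P * \<theta>) \<le> (2 / \<omega>) powr \<theta> * jr powr \<theta> * gr"
    using h2 A unfolding rt by (simp add: field_simps)
  moreover have "A powr p * A powr (P * \<theta>) = A powr P" using pP by (simp add: powr_add[symmetric] algebra_simps)
  ultimately have "\<omega> / 2 * A powr P \<le> (2 / \<omega>) powr \<theta> * jr powr \<theta> * gr" by (simp add: mult.assoc)
  hence "A powr P \<le> (2 / \<omega>) * ((2 / \<omega>) powr \<theta> * jr powr \<theta> * gr)" using om by (simp add: field_simps)
  also have "\<dots> = (2 / \<omega>) powr (1 + \<theta>) * jr powr \<theta> * gr" using om by (simp add: powr_add)
  finally show ?thesis .
qed

lemma pointwise:
  fixes w :: "'a::euclidean_space \<Rightarrow> real" and x :: 'a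
  assumes w[measurable]: "w \<in> borel_measurable lborel"
    and p: "p > 0" and P: "P > 0" and sg: "\<sigma> > 0" and th: "\<theta> = \<sigma> / real DIM('a)"
    and pP: "p = P * (1 - \<theta>)"
    and j: "(\<integral>\<^sup>+ y. ennreal (\<bar>w y\<bar> powr P) \<partial>lborel) = ennreal jr" and jr: "jr > 0"
  shows "ennreal (\<bar>w x\<bar> powr P) \<le> ennreal (2 powr P * (2 / unit_ball_vol (real DIM('a))) powr (1 + \<theta>) * jr powr \<theta>)
     * (\<integral>\<^sup>+ y. ennreal (\<bar>w x - w y\<bar> powr p / norm (x - y) powr (real DIM('a) + \<sigma>)) \<partial>lborel)"
proof (cases "w x = 0")
  case True then show ?thesis by simp
next
  case False
  define N where "N = real DIM('a)"
  have N: "N > 0" by (simp add: N_def)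
  define g where "g = (\<integral>\<^sup>+ y. ennreal (\<bar>w x - w y\<bar> powr p / norm (x - y) powr (N + \<sigma>)) \<partial>lborel)"
  define \<omega> where "\<omega> = unit_ball_vol (real DIM('a))"
  have om: "\<omega> > 0" by (simp add: \<omega>_def)
  have thp: "\<theta> > 0" using th sg N N_def by simp
  define K where "K = 2 powr P * (2 / \<omega>) powr (1 + \<theta>) * jr powr \<theta>"
  have Kpos: "K > 0" using om jr by (simp add: K_def)
  have ubv: "unit_ball_vol (real DIM('a)) \<noteq> 0" using unit_ball_vol_pos[of "real DIM('a)"] by linarith
  show ?thesis
  proof (cases g rule: ennreal_cases)
    case top then show ?thesis using Kpos jr ubv
      by (simp add: g_def K_def N_def ennreal_mult_top)
  next
    case (real gr)
    define A where "A = \<bar>w x\<bar> / 2"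
    have A: "A > 0" using False by (simp add: A_def)
    have key: "\<omega> * r ^ DIM('a) \<le> r powr (N + \<sigma>) / A powr p * gr + 1 / A powr P * jr" if r: "r > 0" for r
    proof -
      define c1 where "c1 = r powr (N + \<sigma>) / A powr p"
      define c2 where "c2 = 1 / A powr P"
      have c1: "c1 \<ge> 0" and c2: "c2 \<ge> 0" by (simp_all add: c1_def c2_def)
      define F where "F = (\<lambda>y. \<bar>w x - w y\<bar> powr p / norm (x - y) powr (N + \<sigma>))"
      define G where "G = (\<lambda>y. \<bar>w y\<bar> powr P)"
      have F0: "F y \<ge> 0" for y by (simp add: F_def)
      have G0: "G y \<ge> 0" for y by (simp add: G_def)
      have pt: "1 \<le> c1 * F y + c2 * G y" if y: "y \<in> ball x r" for y
      proof -
        have b1: "\<bar>w x - w y\<bar> powr p / A powr p \<le> c1 * F y"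
        proof (cases "y = x")
          case True then show ?thesis by (simp add: F_def c1_def)
        next
          case False
          define d where "d = norm (x - y)"
          have d: "d > 0" using False by (simp add: d_def)
          have dr: "d < r" using y by (simp add: d_def dist_norm)
          have "d powr (N + \<sigma>) \<le> r powr (N + \<sigma>)" using d dr N sg by (intro powr_mono2) auto
          have e: "\<bar>w x - w y\<bar> powr p = F y * d powr (N + \<sigma>)" using d by (simp add: F_def d_def)
          have "F y * d powr (N + \<sigma>) \<le> F y * r powr (N + \<sigma>)"
            using \<open>d powr (N + \<sigma>) \<le> r powr (N + \<sigma>)\<close> F0 by (intro mult_left_mono) auto
          hence "\<bar>w x - w y\<bar> powr p / A powr p \<le> F y * r powr (N + \<sigma>) / A powr p"
            unfolding e using A by (intro divide_right_mono) auto
          then show ?thesis by (simp add: c1_def ac_simps)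
        qed
        have b2: "1 \<le> \<bar>w x - w y\<bar> powr p / A powr p + c2 * G y"
        proof -
          have "\<bar>w x\<bar> \<le> \<bar>w x - w y\<bar> + \<bar>w y\<bar>" by linarith
          hence "A \<le> \<bar>w x - w y\<bar> \<or> A \<le> \<bar>w y\<bar>" unfolding A_def by linarith
          thus ?thesis
          proof
            assume h: "A \<le> \<bar>w x - w y\<bar>"
            have "A powr p \<le> \<bar>w x - w y\<bar> powr p" using h A p by (intro powr_mono2) auto
            hence "1 \<le> \<bar>w x - w y\<bar> powr p / A powr p" using A by simp
            moreover have "c2 * G y \<ge> 0" using c2 G0 by simp
            ultimately show ?thesis by linarith
          next
            assume h: "A \<le> \<bar>w y\<bar>"
            have "A powr P \<le> \<bar>w y\<bar> powr P" using h A P by (intro powr_mono2) auto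
            hence "1 \<le> c2 * G y" using A by (simp add: c2_def G_def)
            moreover have "\<bar>w x - w y\<bar> powr p / A powr p \<ge> 0" by simp
            ultimately show ?thesis by linarith
          qed
        qed
        show ?thesis using b1 b2 by linarith
      qed
      have "ennreal (\<omega> * r ^ DIM('a)) = emeasure lborel (ball x r)"
        by (simp add: emeasure_ball[OF less_imp_le[OF r]] \<omega>_def)
      also have "\<dots> = (\<integral>\<^sup>+ y. indicator (ball x r) y \<partial>lborel)" by simp
      also have "\<dots> \<le> (\<integral>\<^sup>+ y. ennreal c1 * ennreal (F y) + ennreal c2 * ennreal (G y) \<partial>lborel)"
      proof (intro nn_integral_mono)
        fix y
        show "indicator (ball x r) y \<le> ennreal c1 * ennreal (F y) + ennreal c2 * ennreal (G y)"
        proof (cases "y \<in> ball x r")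
          case True
          have "ennreal 1 \<le> ennreal (c1 * F y + c2 * G y)" using pt[OF True] by (intro ennreal_leI)
          also have "\<dots> = ennreal c1 * ennreal (F y) + ennreal c2 * ennreal (G y)"
            using c1 c2 F0 G0 by (simp add: ennreal_mult)
          finally show ?thesis using True by simp
        qed simp
      qed
      also have "\<dots> = ennreal c1 * (\<integral>\<^sup>+ y. ennreal (F y) \<partial>lborel) + ennreal c2 * (\<integral>\<^sup>+ y. ennreal (G y) \<partial>lborel)"
        by (simp add: nn_integral_add nn_integral_cmult F_def G_def)
      also have "\<dots> = ennreal (c1 * gr + c2 * jr)"
        using real j c1 c2 jr by (simp add: F_def G_def g_def ennreal_mult)
      finally have "ennreal (\<omega> * r ^ DIM('a)) \<le> ennreal (c1 * gr + c2 * jr)" .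
      hence "\<omega> * r ^ DIM('a) \<le> c1 * gr + c2 * jr" using c1 c2 jr real by (subst (asm) ennreal_le_iff) auto
      thus ?thesis by (simp add: c1_def c2_def)
    qed
    have H: "\<omega> * \<rho> \<le> \<rho> powr (1 + \<theta>) * gr / A powr p + jr / A powr P" if rho: "\<rho> > 0" for \<rho>
    proof -
      define r where "r = \<rho> powr (1 / N)"
      have r: "r > 0" using rho by (simp add: r_def)
      have "r ^ DIM('a) = r powr N" using r by (simp add: powr_realpow N_def)
      also have "\<dots> = \<rho>" using rho N by (simp add: r_def powr_powr)
      finally have e1: "r ^ DIM('a) = \<rho>" .
      have e2: "r powr (N + \<sigma>) = \<rho> powr (1 + \<theta>)" using rho N
        by (simp add: r_def powr_powr th N_def field_simps)
      show ?thesis using key[OF r] e1 e2 by simp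
    qed
    have "A powr P \<le> (2 / \<omega>) powr (1 + \<theta>) * jr powr \<theta> * gr"
      by (rule real_core[OF om jr A \<open>0 \<le> gr\<close> thp P pP H])
    hence "2 powr P * A powr P \<le> 2 powr P * ((2 / \<omega>) powr (1 + \<theta>) * jr powr \<theta> * gr)" by simp
    moreover have "\<bar>w x\<bar> powr P = 2 powr P * A powr P" by (simp add: A_def powr_divide)
    ultimately have "\<bar>w x\<bar> powr P \<le> K * gr" by (simp add: K_def mult.assoc)
    hence "ennreal (\<bar>w x\<bar> powr P) \<le> ennreal (K * gr)" by (intro ennreal_leI)
    also have "\<dots> = ennreal K * g" using real Kpos by (simp add: ennreal_mult)
    finally show ?thesis by (simp add: K_def \<omega>_def g_def N_def)
  qed
qed

lemma core:
  fixes w :: "'a::euclidean_space \<Rightarrow> real"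
  assumes w[measurable]: "w \<in> borel_measurable lborel"
    and p: "p > 0" and P: "P > 0" and sg: "\<sigma> > 0" and th: "\<theta> = \<sigma> / real DIM('a)"
    and pP: "p = P * (1 - \<theta>)"
    and jfin: "(\<integral>\<^sup>+ y. ennreal (\<bar>w y\<bar> powr P) \<partial>lborel) = ennreal jr" and jr0: "jr \<ge> 0"
    and G: "(\<integral>\<^sup>+ z. ennreal (\<bar>w (fst z) - w (snd z)\<bar> powr p / norm (fst z - snd z) powr (real DIM('a) + \<sigma>))
              \<partial>(lborel :: ('a \<times> 'a) measure)) = ennreal Gr" and Gr: "Gr \<ge> 0"
  shows "jr powr (1 - \<theta>) \<le> 2 powr P * (2 / unit_ball_vol (real DIM('a))) powr (1 + \<theta>) * Gr"
proof (cases "jr = 0")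
  case True then show ?thesis using Gr by simp
next
  case False
  hence jr: "jr > 0" using jr0 by simp
  define c where "c = 2 powr P * (2 / unit_ball_vol (real DIM('a))) powr (1 + \<theta>)"
  have ubv: "unit_ball_vol (real DIM('a)) \<noteq> 0" using unit_ball_vol_pos[of "real DIM('a)"] by linarith
  have c: "c > 0" unfolding c_def using ubv by (intro mult_pos_pos) simp_all
  define f where "f = (\<lambda>z::'a\<times>'a. ennreal (\<bar>w (fst z) - w (snd z)\<bar> powr p / norm (fst z - snd z) powr (real DIM('a) + \<sigma>)))"
  have fm: "f \<in> borel_measurable (lborel \<Otimes>\<^sub>M lborel)" unfolding f_def by measurable
  have int: "(\<integral>\<^sup>+ x. \<integral>\<^sup>+ y. f (x, y) \<partial>lborel \<partial>lborel) = ennreal Gr"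
    using lborel.nn_integral_fst[OF fm] G by (simp add: lborel_prod f_def)
  have "ennreal jr = (\<integral>\<^sup>+ x. ennreal (\<bar>w x\<bar> powr P) \<partial>lborel)" using jfin by simp
  also have "\<dots> \<le> (\<integral>\<^sup>+ x. ennreal (c * jr powr \<theta>) * (\<integral>\<^sup>+ y. f (x, y) \<partial>lborel) \<partial>lborel)"
    by (intro nn_integral_mono) (simp add: f_def c_def pointwise[OF w p P sg th pP jfin jr])
  also have "\<dots> = ennreal (c * jr powr \<theta>) * (\<integral>\<^sup>+ x. \<integral>\<^sup>+ y. f (x, y) \<partial>lborel \<partial>lborel)"
    by (rule nn_integral_cmult[OF lborel.borel_measurable_nn_integral_fst[OF fm]])
  also have "\<dots> = ennreal (c * jr powr \<theta>) * ennreal Gr" by (simp only: int)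
  also have "\<dots> = ennreal (c * jr powr \<theta> * Gr)" using c Gr by (simp add: ennreal_mult)
  finally have "jr \<le> c * jr powr \<theta> * Gr" using c Gr by (subst (asm) ennreal_le_iff) auto
  moreover have "jr = jr powr \<theta> * jr powr (1 - \<theta>)" using jr by (simp add: powr_add[symmetric])
  ultimately have "jr powr \<theta> * jr powr (1 - \<theta>) \<le> jr powr \<theta> * (c * Gr)" by (simp add: algebra_simps)
  hence "jr powr (1 - \<theta>) \<le> c * Gr" using jr by (metis mult_le_cancel_left_pos powr_gt_zero less_irrefl)
  thus ?thesis by (simp add: c_def)
qed

lemma trunc_ineq: "\<bar>min \<bar>a\<bar> m - min \<bar>b\<bar> m\<bar> \<le> \<bar>a - b\<bar>" for a b m :: real
  by (auto simp: min_def abs_if)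

lemma sobolev:
  fixes u :: "'a::euclidean_space \<Rightarrow> real" and \<Omega> :: "'a set"
  assumes \<Omega>b: "bounded \<Omega>" and \<Omega>s[measurable]: "\<Omega> \<in> sets lborel"
    and p: "p > 0" and P: "P > 0" and sg: "\<sigma> > 0" and th: "\<theta> = \<sigma> / real DIM('a)" and th1: "\<theta> < 1"
    and pP: "p = P * (1 - \<theta>)"
    and u: "u \<in> borel_measurable lebesgue"
    and T: "(\<integral>\<^sup>+ z. ennreal (\<bar>u (fst z) - u (snd z)\<bar> powr p / norm (fst z - snd z) powr (real DIM('a) + \<sigma>))
              \<partial>(lborel :: ('a \<times> 'a) measure)) = ennreal T" and T0: "T \<ge> 0"
    and ae: "AE x in lebesgue. x \<notin> \<Omega> \<longrightarrow> u x = 0"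
  shows "(\<integral>\<^sup>+ x. ennreal (\<bar>u x\<bar> powr P) \<partial>lebesgue)
     \<le> ennreal ((2 powr P * (2 / unit_ball_vol (real DIM('a))) powr (1 + \<theta>) * T) powr (1 / (1 - \<theta>)))"
proof -
  define c where "c = 2 powr P * (2 / unit_ball_vol (real DIM('a))) powr (1 + \<theta>)"
  have ubv: "unit_ball_vol (real DIM('a)) \<noteq> 0" using unit_ball_vol_pos[of "real DIM('a)"] by linarith
  have c: "c > 0" unfolding c_def using ubv by (intro mult_pos_pos) simp_all
  define F where "F = (\<lambda>(v::'a \<Rightarrow> real) (z::'a\<times>'a). ennreal (\<bar>v (fst z) - v (snd z)\<bar> powr p / norm (fst z - snd z) powr (real DIM('a) + \<sigma>)))"
  obtain v where v[measurable]: "v \<in> borel_measurable lborel" and uv: "AE x in lborel. u x = v x"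
    using completion_ex_borel_measurable_real[OF u] by blast
  obtain B where Bsub: "{x \<in> space lborel. \<not> (u x = v x)} \<subseteq> B" and Be: "emeasure lborel B = 0"
    and Bs: "B \<in> sets lborel"
    using AE_E[OF uv] by blast
  have B: "B \<in> null_sets lborel" using Be Bs by (rule null_setsI)
  have UNIVs: "UNIV \<in> sets (lborel :: 'a measure)" using sets.top[of "lborel :: 'a measure"] by simp
  have n1: "B \<times> UNIV \<in> null_sets (lborel \<Otimes>\<^sub>M lborel :: ('a \<times> 'a) measure)"
    using Bs B UNIVs by (simp add: null_sets_def lborel.emeasure_pair_measure_Times pair_measureI)
  have n2: "UNIV \<times> B \<in> null_sets (lborel \<Otimes>\<^sub>M lborel :: ('a \<times> 'a) measure)"
    using Bs B UNIVs by (simp add: null_sets_def lborel.emeasure_pair_measure_Times pair_measureI)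
  have nullprod: "B \<times> UNIV \<union> UNIV \<times> B \<in> null_sets (lborel \<Otimes>\<^sub>M lborel :: ('a \<times> 'a) measure)"
    using n1 n2 by (rule null_sets.Un)
  have aeF: "AE z in (lborel \<Otimes>\<^sub>M lborel :: ('a \<times> 'a) measure). F v z = F u z"
  proof (rule AE_I'[OF nullprod])
    show "{z \<in> space (lborel \<Otimes>\<^sub>M lborel). \<not> F v z = F u z} \<subseteq> B \<times> UNIV \<union> UNIV \<times> B"
    proof (rule subsetI)
      fix z assume z: "z \<in> {z \<in> space (lborel \<Otimes>\<^sub>M lborel). \<not> F v z = F u z}"
      show "z \<in> B \<times> UNIV \<union> UNIV \<times> B"
      proof (rule ccontr)
        assume "z \<notin> B \<times> UNIV \<union> UNIV \<times> B"
        hence "fst z \<notin> B" "snd z \<notin> B" by (auto simp: mem_Times_iff)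
        hence "u (fst z) = v (fst z)" "u (snd z) = v (snd z)" using Bsub by auto
        hence "F v z = F u z" by (simp add: F_def)
        thus False using z by simp
      qed
    qed
  qed
  have Gv: "(\<integral>\<^sup>+ z. F v z \<partial>(lborel :: ('a \<times> 'a) measure)) = ennreal T"
  proof -
    have "(\<integral>\<^sup>+ z. F v z \<partial>(lborel :: ('a \<times> 'a) measure)) = (\<integral>\<^sup>+ z. F u z \<partial>(lborel :: ('a \<times> 'a) measure))"
      using aeF unfolding lborel_prod by (rule nn_integral_cong_AE)
    also have "\<dots> = ennreal T" using T by (simp add: F_def)
    finally show ?thesis .
  qed
  define w where "w = (\<lambda>(n::nat) x. min \<bar>v x\<bar> (real n))"
  have wm[measurable]: "w n \<in> borel_measurable lborel" for n unfolding w_def by measurable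
  have w0: "w n x \<ge> 0" for n x by (simp add: w_def)
  have aeO: "AE x in lborel. x \<notin> \<Omega> \<longrightarrow> v x = 0"
    using ae uv unfolding AE_completion_iff by eventually_elim auto
  have bnd: "(\<integral>\<^sup>+ x. ennreal (\<bar>w n x\<bar> powr P) \<partial>lborel) \<le> ennreal ((c * T) powr (1 / (1 - \<theta>)))" for n
  proof -
    have "(\<integral>\<^sup>+ z. F (w n) z \<partial>(lborel :: ('a \<times> 'a) measure)) \<le> (\<integral>\<^sup>+ z. F v z \<partial>(lborel :: ('a \<times> 'a) measure))"
    proof (intro nn_integral_mono)
      fix z :: "'a \<times> 'a"
      have "\<bar>w n (fst z) - w n (snd z)\<bar> \<le> \<bar>v (fst z) - v (snd z)\<bar>" unfolding w_def by (rule trunc_ineq)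
      hence "\<bar>w n (fst z) - w n (snd z)\<bar> powr p \<le> \<bar>v (fst z) - v (snd z)\<bar> powr p"
        using p by (intro powr_mono2) auto
      hence "\<bar>w n (fst z) - w n (snd z)\<bar> powr p / norm (fst z - snd z) powr (real DIM('a) + \<sigma>)
          \<le> \<bar>v (fst z) - v (snd z)\<bar> powr p / norm (fst z - snd z) powr (real DIM('a) + \<sigma>)"
        by (intro divide_right_mono) auto
      thus "F (w n) z \<le> F v z" unfolding F_def by (intro ennreal_leI) simp
    qed
    hence "(\<integral>\<^sup>+ z. F (w n) z \<partial>(lborel :: ('a \<times> 'a) measure)) \<le> ennreal T" using Gv by simp
    then obtain gn where gn: "(\<integral>\<^sup>+ z. F (w n) z \<partial>(lborel :: ('a \<times> 'a) measure)) = ennreal gn"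
      and gn0: "gn \<ge> 0" and gnT: "gn \<le> T"
      using T0 by (auto simp: le_ennreal_iff)
    have "(\<integral>\<^sup>+ x. ennreal (\<bar>w n x\<bar> powr P) \<partial>lborel) \<le> (\<integral>\<^sup>+ x. ennreal (real n powr P) * indicator \<Omega> x \<partial>lborel)"
    proof (intro nn_integral_mono_AE)
      show "AE x in lborel. ennreal (\<bar>w n x\<bar> powr P) \<le> ennreal (real n powr P) * indicator \<Omega> x"
        using aeO
      proof eventually_elim
        case (elim x)
        show ?case
        proof (cases "x \<in> \<Omega>")
          case True
          have "\<bar>w n x\<bar> powr P \<le> real n powr P" using w0[of n x] P by (intro powr_mono2) (auto simp: w_def)
          then show ?thesis using True by (simp add: ennreal_leI)
        next
          case False
          then show ?thesis using elim by (simp add: w_def)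
        qed
      qed
    qed
    also have "\<dots> = ennreal (real n powr P) * emeasure lborel \<Omega>" by (rule nn_integral_cmult_indicator[OF \<Omega>s])
    also have "\<dots> < \<infinity>" using emeasure_bounded_finite[OF \<Omega>b] by (simp add: ennreal_mult_less_top)
    finally have "(\<integral>\<^sup>+ x. ennreal (\<bar>w n x\<bar> powr P) \<partial>lborel) < \<infinity>" .
    then obtain jn where jn: "(\<integral>\<^sup>+ x. ennreal (\<bar>w n x\<bar> powr P) \<partial>lborel) = ennreal jn" and jn0: "jn \<ge> 0"
      by (cases "(\<integral>\<^sup>+ x. ennreal (\<bar>w n x\<bar> powr P) \<partial>lborel)" rule: ennreal_cases) auto
    have "jn powr (1 - \<theta>) \<le> c * gn"
      unfolding c_def by (rule core[OF wm p P sg th pP jn jn0 gn[unfolded F_def] gn0])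
    also have "\<dots> \<le> c * T" using c gnT by simp
    finally have h: "jn powr (1 - \<theta>) \<le> c * T" .
    have "jn = (jn powr (1 - \<theta>)) powr (1 / (1 - \<theta>))" using th1 jn0 by (simp add: powr_powr)
    also have "\<dots> \<le> (c * T) powr (1 / (1 - \<theta>))" using h th1 by (intro powr_mono2) auto
    finally show ?thesis using jn by (simp add: ennreal_leI)
  qed
  have sup: "ennreal (\<bar>v x\<bar> powr P) = (SUP n. ennreal (\<bar>w n x\<bar> powr P))" for x
  proof (rule antisym)
    obtain n where n: "\<bar>v x\<bar> \<le> real n" using real_arch_simple by blast
    hence "w n x = \<bar>v x\<bar>" by (simp add: w_def)
    thus "ennreal (\<bar>v x\<bar> powr P) \<le> (SUP n. ennreal (\<bar>w n x\<bar> powr P))"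
      by (intro SUP_upper2[of n]) auto
  next
    show "(SUP n. ennreal (\<bar>w n x\<bar> powr P)) \<le> ennreal (\<bar>v x\<bar> powr P)"
    proof (rule SUP_least)
      fix n
      have "\<bar>w n x\<bar> powr P \<le> \<bar>v x\<bar> powr P" using w0[of n x] P by (intro powr_mono2) (auto simp: w_def)
      thus "ennreal (\<bar>w n x\<bar> powr P) \<le> ennreal (\<bar>v x\<bar> powr P)" by (rule ennreal_leI)
    qed
  qed
  have inc: "incseq (\<lambda>n x. ennreal (\<bar>w n x\<bar> powr P))"
  proof (rule incseq_SucI, rule le_funI)
    fix n x
    have "\<bar>w n x\<bar> powr P \<le> \<bar>w (Suc n) x\<bar> powr P" using w0[of n x] P by (intro powr_mono2) (auto simp: w_def)
    thus "ennreal (\<bar>w n x\<bar> powr P) \<le> ennreal (\<bar>w (Suc n) x\<bar> powr P)" by (rule ennreal_leI)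
  qed
  have "(\<integral>\<^sup>+ x. ennreal (\<bar>u x\<bar> powr P) \<partial>lebesgue) = (\<integral>\<^sup>+ x. ennreal (\<bar>u x\<bar> powr P) \<partial>lborel)"
    by (rule nn_integral_completion)
  also have "\<dots> = (\<integral>\<^sup>+ x. ennreal (\<bar>v x\<bar> powr P) \<partial>lborel)"
    using uv by (intro nn_integral_cong_AE) auto
  also have "\<dots> = (\<integral>\<^sup>+ x. (SUP n. ennreal (\<bar>w n x\<bar> powr P)) \<partial>lborel)" by (simp add: sup)
  also have "\<dots> = (SUP n. (\<integral>\<^sup>+ x. ennreal (\<bar>w n x\<bar> powr P) \<partial>lborel))"
    by (rule nn_integral_monotone_convergence_SUP[OF inc]) simp
  also have "\<dots> \<le> ennreal ((c * T) powr (1 / (1 - \<theta>)))" by (rule SUP_least) (rule bnd)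
  finally show ?thesis by (simp add: c_def)
qed

lemma fin_arith: "x - d \<le> I \<Longrightarrow> d \<le> y \<Longrightarrow> y < z \<Longrightarrow> 2 * z = x \<Longrightarrow> 0 < x \<Longrightarrow> 0 < (I::real)"
  by linarith

lemma split_pow:
  fixes z K0 p q P :: real
  assumes z: "z \<ge> 0" and K0: "K0 > 0" and qp: "q < p" and pP: "p < P"
  shows "z powr p \<le> K0 powr (p - q) * z powr q + K0 powr (p - P) * z powr P"
proof (cases "z = 0")
  case True then show ?thesis by simp
next
  case False
  hence zp: "z > 0" using z by simp
  show ?thesis
  proof (cases "z \<le> K0")
    case True
    have "z powr p = z powr q * z powr (p - q)" using zp by (simp add: powr_add[symmetric])
    also have "\<dots> \<le> z powr q * K0 powr (p - q)"
      using True zp qp by (intro mult_left_mono powr_mono2) auto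
    finally show ?thesis by (simp add: mult.commute add_increasing2)
  next
    case False
    have "z powr p = z powr P * z powr (p - P)" using zp by (simp add: powr_add[symmetric])
    also have "\<dots> \<le> z powr P * K0 powr (p - P)"
      using False zp pP K0 by (intro mult_left_mono powr_mono2') auto
    finally show ?thesis by (simp add: mult.commute add_increasing)
  qed
qed

theorem lemma4p4:
  fixes \<Omega> :: "'a::euclidean_space set" and s p q a b lam :: real
  assumes "smooth_domain \<Omega>" and "bounded \<Omega>"
    and "0 < s" and "s < 1" and "1 < p" and "real DIM('a) > s * p"
    and "0 < a" and "0 < b" and "1 < q" and "q < p" and "0 < lam"
  shows "strict_local_min_X \<Omega> s p (I_fun \<Omega> s p q a b lam) (\<lambda>x. 0)"
proof -
  note as = assms
  have \<Omega>o: "open \<Omega>" using as(1) by (simp add: smooth_domain_def)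
  have \<Omega>s[measurable]: "\<Omega> \<in> sets lborel" using \<Omega>o by (simp add: borel_open)
  have \<Omega>l[measurable]: "\<Omega> \<in> sets lebesgue" using \<Omega>s by (rule sets_completionI_sets)
  define N where "N = real DIM('a)"
  have N: "N > s * p" using as(6) by (simp add: N_def)
  have sp: "s * p > 0" using as(3,5) by simp
  have Npos: "N > 0" using N sp by linarith
  define P where "P = crit_exp DIM('a) s p"
  define \<theta> where "\<theta> = s * p / N"
  have thp: "\<theta> > 0" using sp Npos by (simp add: \<theta>_def)
  have th1: "\<theta> < 1" using N Npos by (simp add: \<theta>_def)
  have Pe: "P = N * p / (N - s * p)" by (simp add: P_def crit_exp_def N_def)
  have Ppos: "P > 0" using Pe N Npos as(5) by simp
  have pP: "p = P * (1 - \<theta>)" using N Npos by (simp add: Pe \<theta>_def field_simps)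
  have "P * \<theta> > 0" using thp Ppos by simp
  hence pltP: "p < P" using pP by (simp add: algebra_simps)
  have p0: "p > 0" using as(5) by simp
  have q0: "q > 0" using as(9) by simp
  have inv: "1 / (1 - \<theta>) = P / p" using pP p0 th1 by (simp add: field_simps)
  define c where "c = 2 powr P * (2 / unit_ball_vol N) powr (1 + \<theta>)"
  have "unit_ball_vol N \<noteq> 0" using unit_ball_vol_pos[of N] Npos by linarith
  hence c: "c > 0" by (simp add: c_def)
  define Kq where "Kq = lam * p / (q * a)"
  have Kq: "Kq > 0" using as p0 q0 by (simp add: Kq_def)
  define K0 where "K0 = Kq powr (1 / (p - q))"
  have K0: "K0 > 0" using Kq by (simp add: K0_def)
  have K0q: "K0 powr (p - q) = Kq" using Kq as(10) by (simp add: K0_def powr_powr)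
  define Kc where "Kc = K0 powr (p - P)"
  have Kc: "Kc > 0" using K0 by (simp add: Kc_def)
  define D where "D = a / p * Kc + b / P"
  have D: "D > 0" using as Kc p0 Ppos by (simp add: D_def add_pos_pos)
  define E where "E = D * c powr (P / p)"
  have E: "E > 0" using D c by (simp add: E_def)
  define e where "e = P / p - 1"
  have e: "e > 0" using pltP p0 by (simp add: e_def field_simps)
  define \<tau> where "\<tau> = (1 / (2 * p * E)) powr (1 / e)"
  have \<tau>: "\<tau> > 0" using E p0 by (simp add: \<tau>_def)
  have \<tau>e: "\<tau> powr e = 1 / (2 * p * E)" using E p0 e by (simp add: \<tau>_def powr_powr)
  define \<delta> where "\<delta> = \<tau> powr (1 / p)"
  have \<delta>: "\<delta> > 0" using \<tau> by (simp add: \<delta>_def)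
  have zero_in: "(\<lambda>x. 0) \<in> Xsp \<Omega> s p" by (simp add: Xsp_def Wsp_def gagliardo_def)
  have I0: "I_fun \<Omega> s p q a b lam (\<lambda>x. 0) = 0" by (simp add: I_fun_def Xnorm_def gagliardo_def)
  have setint: "(LINT x:\<Omega>|lebesgue. f x) = enn2real (\<integral>\<^sup>+ x. ennreal (indicator \<Omega> x * f x) \<partial>lebesgue)"
    if fm[measurable]: "f \<in> borel_measurable lebesgue" and f0: "\<And>x. f x \<ge> 0" for f :: "'a \<Rightarrow> real"
    unfolding set_lebesgue_integral_def using f0 by (subst integral_eq_nn_integral) auto
  have main: "0 < I_fun \<Omega> s p q a b lam v"
    if v: "v \<in> Xsp \<Omega> s p" and v1: "0 < Xnorm s p v" and v2: "Xnorm s p v < \<delta>" for v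
  proof -
    have vm[measurable]: "v \<in> borel_measurable lebesgue" and vint: "integrable lebesgue (\<lambda>x. \<bar>v x\<bar> powr p)"
      and gf: "gagliardo s p v < \<infinity>" and ae: "AE x in lebesgue. x \<notin> \<Omega> \<longrightarrow> v x = 0"
      using v by (auto simp: Xsp_def Wsp_def)
    obtain t where gt: "gagliardo s p v = ennreal t" and t0: "t \<ge> 0"
      using gf by (cases "gagliardo s p v" rule: ennreal_cases) auto
    have Xn: "Xnorm s p v = t powr (1 / p)" using t0 by (simp add: Xnorm_def gt)
    have tpos: "t > 0" using v1 t0 Xn by (cases "t = 0") auto
    have Xnp: "Xnorm s p v powr p = t" using Xn t0 p0 by (simp add: powr_powr)
    have t\<tau>: "t < \<tau>"
    proof (rule ccontr)
      assume "\<not> t < \<tau>"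
      hence "\<tau> powr (1 / p) \<le> t powr (1 / p)" using \<tau> p0 by (intro powr_mono2) auto
      thus False using v2 Xn by (simp add: \<delta>_def)
    qed
    have thN: "\<theta> = s * p / real DIM('a)" by (simp add: \<theta>_def N_def)
    have gT: "(\<integral>\<^sup>+ z. ennreal (\<bar>v (fst z) - v (snd z)\<bar> powr p / norm (fst z - snd z) powr (real DIM('a) + s * p))
              \<partial>(lborel :: ('a \<times> 'a) measure)) = ennreal t" using gt by (simp add: gagliardo_def)
    note Sob0 = sobolev[OF as(2) \<Omega>s p0 Ppos sp thN th1 pP vm gT t0 ae]
    have Sob: "(\<integral>\<^sup>+ x. ennreal (\<bar>v x\<bar> powr P) \<partial>lebesgue) \<le> ennreal ((c * t) powr (P / p))"
      using Sob0 by (simp add: N_def c_def inv)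
    have ctP: "(c * t) powr (P / p) = c powr (P / p) * t powr (P / p)" using c t0 by (simp add: powr_mult)
    define Se where "Se = (\<integral>\<^sup>+ x. ennreal (indicator \<Omega> x * \<bar>v x\<bar> powr P) \<partial>lebesgue)"
    have "Se \<le> (\<integral>\<^sup>+ x. ennreal (\<bar>v x\<bar> powr P) \<partial>lebesgue)"
      unfolding Se_def by (intro nn_integral_mono) (auto simp: indicator_def)
    hence Sele: "Se \<le> ennreal (c powr (P / p) * t powr (P / p))" using Sob ctP by simp
    define Sr where "Sr = enn2real Se"
    have SeSr: "Se = ennreal Sr" using Sele unfolding Sr_def
      by (cases Se rule: ennreal_cases) (auto simp: top_unique)
    have Sr0: "Sr \<ge> 0" by (simp add: Sr_def)
    have Srle: "Sr \<le> c powr (P / p) * t powr (P / p)" unfolding Sr_def using Sele by (intro enn2real_leI) auto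
    have ind: "(\<integral>\<^sup>+ x. ennreal (indicator \<Omega> x) \<partial>lebesgue) = emeasure lborel \<Omega>"
    proof -
      have "(\<integral>\<^sup>+ x. ennreal (indicator \<Omega> x) \<partial>lebesgue) = (\<integral>\<^sup>+ x. indicator \<Omega> x \<partial>lborel)"
        by (subst nn_integral_completion) (simp add: ennreal_indicator)
      also have "\<dots> = emeasure lborel \<Omega>" by (rule nn_integral_indicator[OF \<Omega>s])
      finally show ?thesis .
    qed
    define Qe where "Qe = (\<integral>\<^sup>+ x. ennreal (indicator \<Omega> x * \<bar>v x\<bar> powr q) \<partial>lebesgue)"
    have "Qe \<le> (\<integral>\<^sup>+ x. ennreal (indicator \<Omega> x) + ennreal (\<bar>v x\<bar> powr p) \<partial>lebesgue)"
      unfolding Qe_def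
    proof (intro nn_integral_mono)
      fix x
      have "indicator \<Omega> x * \<bar>v x\<bar> powr q \<le> indicator \<Omega> x + \<bar>v x\<bar> powr p"
      proof (cases "\<bar>v x\<bar> \<le> 1")
        case True
        have "\<bar>v x\<bar> powr q \<le> 1 powr q" using True q0 by (intro powr_mono2) auto
        hence h1: "\<bar>v x\<bar> powr q \<le> 1" by simp
        have h0: "0 \<le> \<bar>v x\<bar> powr p" by simp
        have "\<bar>v x\<bar> powr q \<le> 1 + \<bar>v x\<bar> powr p" using h1 h0 by linarith
        thus ?thesis by (auto simp: indicator_def)
      next
        case False
        have "\<bar>v x\<bar> powr q \<le> \<bar>v x\<bar> powr p" using False as(10) by (intro powr_mono) auto
        thus ?thesis by (auto simp: indicator_def)
      qed
      thus "ennreal (indicator \<Omega> x * \<bar>v x\<bar> powr q) \<le> ennreal (indicator \<Omega> x) + ennreal (\<bar>v x\<bar> powr p)"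
        by (simp add: ennreal_leI del: ennreal_plus add: ennreal_plus[symmetric])
    qed
    also have "\<dots> = (\<integral>\<^sup>+ x. ennreal (indicator \<Omega> x) \<partial>lebesgue) + (\<integral>\<^sup>+ x. ennreal (\<bar>v x\<bar> powr p) \<partial>lebesgue)"
      by (intro nn_integral_add; measurable)
    also have "\<dots> = emeasure lborel \<Omega> + (\<integral>\<^sup>+ x. ennreal (\<bar>v x\<bar> powr p) \<partial>lebesgue)"
      using ind by simp
    also have "\<dots> < \<infinity>" using emeasure_bounded_finite[OF as(2)] integrableD(2)[OF vint]
      by (simp add: less_top)
    finally have Qfin: "Qe < \<infinity>" .
    define Q where "Q = enn2real Qe"
    have QeQ: "Qe = ennreal Q" using Qfin unfolding Q_def by (cases Qe rule: ennreal_cases) auto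
    have Q0: "Q \<ge> 0" by (simp add: Q_def)
    define Pe where "Pe = (\<integral>\<^sup>+ x. ennreal (indicator \<Omega> x * \<bar>v x\<bar> powr p) \<partial>lebesgue)"
    have "Pe \<le> (\<integral>\<^sup>+ x. ennreal Kq * ennreal (indicator \<Omega> x * \<bar>v x\<bar> powr q) + ennreal Kc * ennreal (indicator \<Omega> x * \<bar>v x\<bar> powr P) \<partial>lebesgue)"
      unfolding Pe_def
    proof (intro nn_integral_mono)
      fix x
      have "\<bar>v x\<bar> powr p \<le> Kq * \<bar>v x\<bar> powr q + Kc * \<bar>v x\<bar> powr P"
        using split_pow[OF _ K0 as(10) pltP, of "\<bar>v x\<bar>"] K0q by (simp add: Kc_def)
      hence "indicator \<Omega> x * \<bar>v x\<bar> powr p \<le> Kq * (indicator \<Omega> x * \<bar>v x\<bar> powr q) + Kc * (indicator \<Omega> x * \<bar>v x\<bar> powr P)"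
        by (auto simp: indicator_def)
      hence "ennreal (indicator \<Omega> x * \<bar>v x\<bar> powr p) \<le> ennreal (Kq * (indicator \<Omega> x * \<bar>v x\<bar> powr q) + Kc * (indicator \<Omega> x * \<bar>v x\<bar> powr P))"
        by (rule ennreal_leI)
      also have "\<dots> = ennreal Kq * ennreal (indicator \<Omega> x * \<bar>v x\<bar> powr q) + ennreal Kc * ennreal (indicator \<Omega> x * \<bar>v x\<bar> powr P)"
        using Kq Kc by (simp add: ennreal_mult)
      finally show "ennreal (indicator \<Omega> x * \<bar>v x\<bar> powr p) \<le> ennreal Kq * ennreal (indicator \<Omega> x * \<bar>v x\<bar> powr q) + ennreal Kc * ennreal (indicator \<Omega> x * \<bar>v x\<bar> powr P)" .
    qed
    also have "\<dots> = ennreal Kq * Qe + ennreal Kc * Se"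
      by (simp add: nn_integral_add nn_integral_cmult Qe_def Se_def)
    also have "\<dots> = ennreal (Kq * Q + Kc * Sr)" using Kq Kc Q0 Sr0 QeQ SeSr by (simp add: ennreal_mult)
    finally have Pele: "enn2real Pe \<le> Kq * Q + Kc * Sr" using Kq Kc Q0 Sr0 by (intro enn2real_leI) auto
    define Re where "Re = (\<integral>\<^sup>+ x. ennreal (indicator \<Omega> x * max (v x) 0 powr P) \<partial>lebesgue)"
    have "Re \<le> Se" unfolding Re_def Se_def
    proof (intro nn_integral_mono ennreal_leI)
      fix x
      have "max (v x) 0 powr P \<le> \<bar>v x\<bar> powr P" using Ppos by (intro powr_mono2) auto
      thus "indicator \<Omega> x * max (v x) 0 powr P \<le> indicator \<Omega> x * \<bar>v x\<bar> powr P" by (auto simp: indicator_def)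
    qed
    hence Rele: "enn2real Re \<le> Sr" using SeSr Sr0 by (intro enn2real_leI) auto
    have LQ: "(LINT x:\<Omega>|lebesgue. \<bar>v x\<bar> powr q) = Q" by (simp add: setint Q_def Qe_def)
    have LP: "(LINT x:\<Omega>|lebesgue. \<bar>v x\<bar> powr p) = enn2real Pe" by (simp add: setint Pe_def)
    have LR: "(LINT x:\<Omega>|lebesgue. max (v x) 0 powr P) = enn2real Re" by (simp add: setint Re_def)
    have Ieq: "I_fun \<Omega> s p q a b lam v = 1 / p * t + lam / q * Q - a / p * enn2real Pe - b / P * enn2real Re"
      unfolding I_fun_def P_def[symmetric] Xnp LQ LP LR by simp
    have "a / p * enn2real Pe \<le> a / p * (Kq * Q + Kc * Sr)" using Pele as(7) p0 by (intro mult_left_mono) auto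
    also have "\<dots> = lam / q * Q + a / p * Kc * Sr" using as(7) p0 q0 by (simp add: Kq_def field_simps)
    finally have h1: "a / p * enn2real Pe \<le> lam / q * Q + a / p * Kc * Sr" .
    have h2: "b / P * enn2real Re \<le> b / P * Sr" using Rele as(8) Ppos by (intro mult_left_mono) auto
    have "I_fun \<Omega> s p q a b lam v \<ge> t / p - D * Sr" using h1 h2 unfolding Ieq D_def by (simp add: algebra_simps)
    moreover have A2: "D * Sr \<le> E * t powr (P / p)"
    proof -
      have "D * Sr \<le> D * (c powr (P / p) * t powr (P / p))" using Srle D by (intro mult_left_mono) auto
      thus ?thesis by (simp add: E_def mult.assoc)
    qed
    moreover have A3: "t powr (P / p) = t * t powr e"
    proof -
      have "t powr (P / p) = t powr (1 + e)" by (simp add: e_def)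
      also have "\<dots> = t * t powr e" using tpos by (simp add: powr_add)
      finally show ?thesis .
    qed
    moreover have A6: "t * (E * t powr e) < t * (1 / (2 * p))"
    proof -
      have A4: "t powr e < 1 / (2 * p * E)" using tpos t\<tau> e \<tau>e powr_less_mono2[of e t \<tau>] by simp
      have "E * t powr e < E * (1 / (2 * p * E))" using A4 E by (rule mult_strict_left_mono)
      also have "E * (1 / (2 * p * E)) = 1 / (2 * p)" using E by simp
      finally show ?thesis using tpos by (rule mult_strict_left_mono)
    qed
    moreover have "E * t powr (P / p) = t * (E * t powr e)" using A3 by simp
    ultimately have B0: "t / p - D * Sr \<le> I_fun \<Omega> s p q a b lam v" "D * Sr \<le> E * t powr (P / p)"
      by auto
    have B1: "t / p - D * Sr \<le> I_fun \<Omega> s p q a b lam v" "D * Sr \<le> E * t powr (P / p)"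
      "E * t powr (P / p) < t * (1 / (2 * p))"
      using B0 apply auto[2] by (metis A3 A6 mult.left_commute)
    have B2: "2 * (t * (1 / (2 * p))) = t / p" by simp
    have B3: "t / p > 0" using tpos p0 by simp
    show ?thesis by (rule fin_arith[OF B1 B2 B3])
  qed
  show ?thesis unfolding strict_local_min_X_def
    using zero_in I0 \<delta> main by auto
qed

end
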